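(* Let $L$ be as in the context, $P$ a cell of $\Lambda(L)$, and $f$ an automorphism of $L$ with $f(P)=P$ which is $P$-direct (so $f$ is induced by a symmetry of the Coxeter graph of $P$). Suppose $v\in\Phi^b$ is a $2$-root (a vertex of the Coxeter graph with $v^2=2$) with $f(v)=v$, let $L_v=\{x\in L: xv=0\}$ and let $f_v$ be the restriction of $f$ to $L_v$. If $f$ is $\mathbb{Z}/3$-reversing, then $f_v$ is $\mathbb{Z}/3$-reversing, and $f_v$ preserves and is $P_v$-direct for some cell $P_v$ of $\Lambda(L_v)$.
   Context: Lattices considered: integral lattices $L$ of signature $(n,1)$ with discriminant group $L^*/L\cong\mathbb{Z}/3\oplus D$, $D$ $2$-periodic; for such $L$, $V_k=\{v\in L:v^2=k,\ 2vw/v^2\in\mathbb{Z}\ \forall w\in L\}$ ($k=2,6$), $\Phi=V_2\cup V_6$, assumed of full rank. $\Lambda(L)=\{x\in L\otimes\mathbb{R}:x^2<0\}/\mathbb{R}^*$, $\Lambda^\sharp(L)=\{x: x^2<0\}/\mathbb{R}_{>0}$; cells of $\Lambda(L)$ are closures of components of the complement of the hyperplanes $v^\perp$, $v\in\Phi$ (the same definitions apply to $L_v$ with its own $V_2,V_6$). A cell $P$ lifts to two opposite pieces $\pm P^\sharp$ in $\Lambda^\sharp$; an automorphism $g$ with $g(P)=P$ is $P$-direct if $g(P^\sharp)=P^\sharp$ and $P$-reversing otherwise. $\Phi^b$ is the set of roots $v\in\Phi$, pairing negatively with an interior point of $P^\sharp$, whose hyperplanes $v^\perp$ support the walls of $P$.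 $g$ is $\mathbb{Z}/3$-direct if it acts trivially on the $3$-primary part of $L^*/L$, and $\mathbb{Z}/3$-reversing otherwise. *)

theory Defs
  imports "HOL-Analysis.Analysis"
begin

text \<open>Ambient space: real^'n with a symmetric bilinear form given by a matrix Q.
  A lattice is a subset L of the ambient space; its real span plays the role of L tensor R.\<close>

definition bf :: "real^'n^'n \<Rightarrow> real^'n \<Rightarrow> real^'n \<Rightarrow> real" where
  "bf Q x y = x \<bullet> (Q *v y)"

definition is_lattice :: "(real^'n) set \<Rightarrow> bool" where
  "is_lattice L \<longleftrightarrow> (\<exists>B. finite B \<and> independent B \<and>
      L = {\<Sum>b\<in>B. real_of_int (c b) *\<^sub>R b | c. True})"

definition integral_form :: "real^'n^'n \<Rightarrow> (real^'n) set \<Rightarrow> bool" where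
  "integral_form Q L \<longleftrightarrow> (\<forall>x\<in>L. \<forall>y\<in>L. bf Q x y \<in> \<int>)"

text \<open>Signature (n,1) on the subspace W: some negative vector whose orthogonal
  complement in W is positive definite.\<close>
definition lorentzian :: "real^'n^'n \<Rightarrow> (real^'n) set \<Rightarrow> bool" where
  "lorentzian Q W \<longleftrightarrow> (\<exists>e\<in>W. bf Q e e < 0 \<and>
      (\<forall>x\<in>W. x \<noteq> 0 \<and> bf Q x e = 0 \<longrightarrow> bf Q x x > 0))"

definition dual_lattice :: "real^'n^'n \<Rightarrow> (real^'n) set \<Rightarrow> (real^'n) set" where
  "dual_lattice Q L = {x \<in> span L. \<forall>w\<in>L. bf Q x w \<in> \<int>}"

text \<open>L*/L is isomorphic to Z/3 (+) D with 2D = 0: it is the internal direct sum of a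
  cyclic subgroup of order 3 (generated by z mod L) and its 2-torsion subgroup.\<close>
definition disc_Z3_plus_2periodic :: "real^'n^'n \<Rightarrow> (real^'n) set \<Rightarrow> bool" where
  "disc_Z3_plus_2periodic Q L \<longleftrightarrow>
    (\<exists>z\<in>dual_lattice Q L. z \<notin> L \<and> 3 *\<^sub>R z \<in> L \<and>
       (\<forall>y\<in>dual_lattice Q L. \<exists>k::int. \<exists>d\<in>dual_lattice Q L.
           2 *\<^sub>R d \<in> L \<and> y - real_of_int k *\<^sub>R z - d \<in> L) \<and>
       (\<forall>k::int. \<forall>d\<in>dual_lattice Q L.
           2 *\<^sub>R d \<in> L \<and> real_of_int k *\<^sub>R z - d \<in> L \<longrightarrow> real_of_int k *\<^sub>R z \<in> L))"

definition V_roots :: "real^'n^'n \<Rightarrow> (real^'n) set \<Rightarrow> real \<Rightarrow> (real^'n) set" where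
  "V_roots Q L k = {v \<in> L. bf Q v v = k \<and> (\<forall>w\<in>L. 2 * bf Q v w / bf Q v v \<in> \<int>)}"

definition Phi :: "real^'n^'n \<Rightarrow> (real^'n) set \<Rightarrow> (real^'n) set" where
  "Phi Q L = V_roots Q L 2 \<union> V_roots Q L 6"

text \<open>Standing assumptions on L (the lattice "as in the context"); L has full rank in the ambient space.\<close>
definition good_lattice :: "real^'n^'n \<Rightarrow> (real^'n) set \<Rightarrow> bool" where
  "good_lattice Q L \<longleftrightarrow> transpose Q = Q \<and> is_lattice L \<and> span L = UNIV \<and>
     integral_form Q L \<and> lorentzian Q (span L) \<and> disc_Z3_plus_2periodic Q L \<and>
     span (Phi Q L) = span L"

definition automorphism :: "real^'n^'n \<Rightarrow> (real^'n) set \<Rightarrow> (real^'n \<Rightarrow> real^'n) \<Rightarrow> bool" where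
  "automorphism Q L f \<longleftrightarrow> linear f \<and> f ` L = L \<and>
     (\<forall>x\<in>L. \<forall>y\<in>L. bf Q (f x) (f y) = bf Q x y)"

text \<open>Negative cone in L tensor R (Lambda^sharp is its quotient by positive scalars,
  Lambda its quotient by nonzero scalars).\<close>
definition neg_cone :: "real^'n^'n \<Rightarrow> (real^'n) set \<Rightarrow> (real^'n) set" where
  "neg_cone Q L = {x \<in> span L. bf Q x x < 0}"

definition open_chambers :: "real^'n^'n \<Rightarrow> (real^'n) set \<Rightarrow> (real^'n) set" where
  "open_chambers Q L = {x \<in> neg_cone Q L. \<forall>v\<in>Phi Q L. bf Q v x \<noteq> 0}"

text \<open>Lift P^sharp of a cell: closure (inside the negative cone) of a connected component K of
  the complement of the hyperplanes. The cell P itself is the union of P^sharp and -P^sharp.\<close>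
definition cell_lift :: "real^'n^'n \<Rightarrow> (real^'n) set \<Rightarrow> real^'n \<Rightarrow> (real^'n) set" where
  "cell_lift Q L x = neg_cone Q L \<inter> closure (connected_component_set (open_chambers Q L) x)"

definition cell_of :: "real^'n^'n \<Rightarrow> (real^'n) set \<Rightarrow> real^'n \<Rightarrow> (real^'n) set" where
  "cell_of Q L x = cell_lift Q L x \<union> uminus ` cell_lift Q L x"

definition is_cell :: "real^'n^'n \<Rightarrow> (real^'n) set \<Rightarrow> (real^'n) set \<Rightarrow> bool" where
  "is_cell Q L P \<longleftrightarrow> (\<exists>x\<in>open_chambers Q L. P = cell_of Q L x)"

definition preserves_direct :: "real^'n^'n \<Rightarrow> (real^'n) set \<Rightarrow> (real^'n) set \<Rightarrow> (real^'n \<Rightarrow> real^'n) \<Rightarrow> bool" where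
  "preserves_direct Q L P g \<longleftrightarrow> g ` P = P \<and>
     (\<exists>x\<in>open_chambers Q L. P = cell_of Q L x \<and> g ` cell_lift Q L x = cell_lift Q L x)"

text \<open>Phi^b for the lift P^sharp = cell_lift Q L x: roots pairing negatively with an interior point
  of P^sharp whose hyperplane supports a wall (a codimension-one face) of P^sharp.\<close>
definition Phi_b :: "real^'n^'n \<Rightarrow> (real^'n) set \<Rightarrow> real^'n \<Rightarrow> (real^'n) set" where
  "Phi_b Q L x = {v \<in> Phi Q L.
      (\<exists>y\<in>connected_component_set (open_chambers Q L) x. bf Q v y < 0) \<and>
      (\<exists>p\<in>cell_lift Q L x. bf Q v p = 0 \<and>
         (\<exists>e>0. {y \<in> span L. bf Q v y = 0} \<inter> ball p e \<subseteq> cell_lift Q L x))}"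

definition three_primary :: "real^'n^'n \<Rightarrow> (real^'n) set \<Rightarrow> (real^'n) set" where
  "three_primary Q L = {x \<in> dual_lattice Q L. \<exists>k::nat. (3::real) ^ k *\<^sub>R x \<in> L}"

definition Z3_direct :: "real^'n^'n \<Rightarrow> (real^'n) set \<Rightarrow> (real^'n \<Rightarrow> real^'n) \<Rightarrow> bool" where
  "Z3_direct Q L g \<longleftrightarrow> (\<forall>x\<in>three_primary Q L. g x - x \<in> L)"

definition orth_sublattice :: "real^'n^'n \<Rightarrow> (real^'n) set \<Rightarrow> real^'n \<Rightarrow> (real^'n) set" where
  "orth_sublattice Q L v = {x \<in> L. bf Q x v = 0}"

end

theory Submission
  imports Defs
begin


lemma bf_sym: assumes "transpose Q = Q" shows "bf Q x y = bf Q y x"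
  by (metis bf_def dot_lmul_matrix inner_commute transpose_matrix_vector assms)

lemma bf_add_left[simp]: "bf Q (x+y) z = bf Q x z + bf Q y z"
  by (simp add: bf_def inner_add_left)
lemma bf_add_right[simp]: "bf Q z (x+y) = bf Q z x + bf Q z y"
  by (simp add: bf_def inner_add_right matrix_vector_right_distrib)
lemma bf_diff_left[simp]: "bf Q (x-y) z = bf Q x z - bf Q y z"
  by (simp add: bf_def inner_diff_left)
lemma bf_diff_right[simp]: "bf Q z (x-y) = bf Q z x - bf Q z y"
  by (simp add: bf_def inner_diff_right linear_diff[OF matrix_vector_mul_linear])
lemma bf_scale_left[simp]: "bf Q (r *\<^sub>R x) z = r * bf Q x z"
  by (simp add: bf_def)
lemma bf_scale_right[simp]: "bf Q z (r *\<^sub>R x) = r * bf Q z x"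
  by (simp add: bf_def linear_scale[OF matrix_vector_mul_linear])
lemma bf_neg_left[simp]: "bf Q (- x) z = - bf Q x z"
  by (simp add: bf_def)
lemma bf_neg_right[simp]: "bf Q z (- x) = - bf Q z x"
  by (simp add: bf_def linear_neg[OF matrix_vector_mul_linear])
lemma bf_zero[simp]: "bf Q 0 z = 0" "bf Q z 0 = 0"
  by (simp_all add: bf_def)

lemma linear_bf_right: "linear (\<lambda>y. bf Q u y)"
  by (simp add: linear_iff)
lemma linear_bf_left: "linear (\<lambda>y. bf Q y u)"
  by (simp add: linear_iff)
lemma cont_bf_right: "continuous_on S (\<lambda>y. bf Q u y)"
  by (rule linear_continuous_on) (simp add: linear_bf_right flip: linear_conv_bounded_linear)
lemma cont_bf_left: "continuous_on S (\<lambda>y. bf Q y u)"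
  by (rule linear_continuous_on) (simp add: linear_bf_left flip: linear_conv_bounded_linear)

lemma lat_add: assumes "is_lattice L" "x \<in> L" "y \<in> L" shows "x + y \<in> L"
proof -
  obtain B where L: "L = {\<Sum>b\<in>B. real_of_int (c b) *\<^sub>R b | c. True}"
    using assms(1) unfolding is_lattice_def by blast
  obtain c1 where x: "x = (\<Sum>b\<in>B. real_of_int (c1 b) *\<^sub>R b)" using assms(2) L by blast
  obtain c2 where y: "y = (\<Sum>b\<in>B. real_of_int (c2 b) *\<^sub>R b)" using assms(3) L by blast
  have "x + y = (\<Sum>b\<in>B. real_of_int ((\<lambda>b. c1 b + c2 b) b) *\<^sub>R b)"
    by (simp add: x y sum.distrib scaleR_add_left)
  then show ?thesis unfolding L by (intro CollectI exI[where x="\<lambda>b. c1 b + c2 b"]) simp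
qed

lemma lat_scale: assumes "is_lattice L" "x \<in> L" shows "real_of_int k *\<^sub>R x \<in> L"
proof -
  obtain B where L: "L = {\<Sum>b\<in>B. real_of_int (c b) *\<^sub>R b | c. True}"
    using assms(1) unfolding is_lattice_def by blast
  obtain c1 where x: "x = (\<Sum>b\<in>B. real_of_int (c1 b) *\<^sub>R b)" using assms(2) L by blast
  have "real_of_int k *\<^sub>R x = (\<Sum>b\<in>B. real_of_int ((\<lambda>b. k * c1 b) b) *\<^sub>R b)"
    by (simp add: x scaleR_sum_right)
  then show ?thesis unfolding L by (intro CollectI exI[where x="\<lambda>b. k * c1 b"]) simp
qed

lemma lat_diff: assumes "is_lattice L" "x \<in> L" "y \<in> L" shows "x - y \<in> L"
  using lat_add[OF assms(1,2) lat_scale[OF assms(1,3), of "-1"]] by simp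

lemma lat_int_scale: assumes "is_lattice L" "x \<in> L" "r \<in> \<int>" shows "r *\<^sub>R x \<in> L"
  using assms lat_scale by (metis Ints_cases)

lemma sign_const:
  fixes \<phi> :: "'a::topological_space \<Rightarrow> real"
  assumes "connected S" "continuous_on S \<phi>" "\<forall>y\<in>S. \<phi> y \<noteq> 0"
  shows "(\<forall>y\<in>S. \<phi> y > 0) \<or> (\<forall>y\<in>S. \<phi> y < 0)"
proof (rule ccontr)
  assume "\<not> ?thesis"
  then obtain a b where ab: "a\<in>S" "b\<in>S" "\<phi> a \<le> 0" "\<phi> b \<ge> 0" by (meson not_less)
  have c: "connected (\<phi> ` S)" by (rule connected_continuous_image[OF assms(2,1)])
  have "0 \<in> \<phi> ` S" by (rule connectedD_interval[OF c]) (use ab in auto)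
  then show False using assms(3) by auto
qed

lemma discr:
  fixes A b C :: real
  assumes "\<forall>t. 0 \<le> A + 2*t*b + t^2*C" "C \<ge> 0"
  shows "b^2 \<le> A*C"
proof (cases "C = 0")
  case True
  show ?thesis
  proof (cases "b = 0")
    case False
    have "0 \<le> A + 2*(-(A+1)/(2*b))*b + (-(A+1)/(2*b))^2*C" using assms(1) by blast
    then show ?thesis using False True by (simp add: field_simps)
  qed (use True in simp)
next
  case False
  then have Cp: "C > 0" using assms(2) by simp
  have "0 \<le> A + 2*(-b/C)*b + (-b/C)^2*C" using assms(1) by blast
  then have "0 \<le> A - b^2/C" using Cp by (simp add: field_simps power2_eq_square)
  then show ?thesis using Cp by (simp add: field_simps)
qed




locale ctx =
  fixes Q :: "real^'n^'n" and L :: "(real^'n) set" and x0 v e :: "real^'n"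
  assumes symQ: "transpose Q = Q" and lat: "is_lattice L" and spanL: "span L = UNIV"
  and integ: "integral_form Q L"
  and vL: "v \<in> L" and vv: "bf Q v v = 2"
  and x0: "x0 \<in> open_chambers Q L"
  and ee: "bf Q e e < 0" and epos: "\<And>x. x \<noteq> 0 \<Longrightarrow> bf Q x e = 0 \<Longrightarrow> bf Q x x > 0"
  and x0e: "bf Q x0 e < 0"
begin

abbreviation "P \<equiv> cell_lift Q L x0"
abbreviation "K \<equiv> connected_component_set (open_chambers Q L) x0"
abbreviation "Lv \<equiv> orth_sublattice Q L v"
abbreviation "OCv \<equiv> open_chambers Q Lv"

lemma B_sym: "bf Q x y = bf Q y x" using bf_sym[OF symQ] .

lemma int_L: "x \<in> L \<Longrightarrow> y \<in> L \<Longrightarrow> bf Q x y \<in> \<int>"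
  using integ unfolding integral_form_def by blast

lemma Lv_sub: "Lv \<subseteq> L" unfolding orth_sublattice_def by auto

lemma v_perp_span: assumes "bf Q v y = 0" shows "y \<in> span Lv"
proof -
  define \<pi> where "\<pi> = (\<lambda>x. x - (bf Q v x / 2) *\<^sub>R v)"
  have lin: "linear \<pi>" unfolding \<pi>_def linear_iff by (simp add: algebra_simps add_divide_distrib)
  have "\<pi> ` L \<subseteq> span Lv"
  proof
    fix z assume "z \<in> \<pi> ` L"
    then obtain b where b: "b \<in> L" "z = \<pi> b" by auto
    define w where "w = 2 *\<^sub>R b - bf Q v b *\<^sub>R v"
    have "2 *\<^sub>R b \<in> L" using lat_int_scale[OF lat b(1), of 2] by simp
    moreover have "bf Q v b *\<^sub>R v \<in> L" using lat_int_scale[OF lat vL int_L[OF vL b(1)]] .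
    ultimately have "w \<in> L" unfolding w_def using lat_diff[OF lat] by blast
    moreover have "bf Q w v = 0" unfolding w_def using vv B_sym[of b v] by simp
    ultimately have "w \<in> Lv" unfolding orth_sublattice_def by simp
    then have "(1/2) *\<^sub>R w \<in> span Lv" by (simp add: span_base span_scale)
    moreover have "(1/2) *\<^sub>R w = z" unfolding w_def b(2) \<pi>_def by (simp add: algebra_simps)
    ultimately show "z \<in> span Lv" by simp
  qed
  then have "span (\<pi> ` L) \<subseteq> span Lv" by (simp add: span_minimal)
  then have "\<pi> ` span L \<subseteq> span Lv" using span_linear_image[OF lin] by simp
  moreover have "\<pi> y = y" unfolding \<pi>_def using assms by simp
  ultimately show ?thesis using spanL by (metis UNIV_I image_subset_iff)
qed

lemma Phiv_sub: "Phi Q Lv \<subseteq> Phi Q L"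
proof
  fix u assume u: "u \<in> Phi Q Lv"
  then have uLv: "u \<in> Lv" unfolding Phi_def V_roots_def by auto
  then have uL: "u \<in> L" and uv: "bf Q u v = 0" unfolding orth_sublattice_def by auto
  show "u \<in> Phi Q L"
  proof (cases "bf Q u u = 2")
    case True
    have "\<forall>w\<in>L. 2 * bf Q u w / bf Q u u \<in> \<int>" using True int_L[OF uL] by simp
    then show ?thesis using True uL unfolding Phi_def V_roots_def by auto
  next
    case False
    then have u6: "bf Q u u = 6" and root: "\<forall>w\<in>Lv. 2 * bf Q u w / bf Q u u \<in> \<int>"
      using u unfolding Phi_def V_roots_def by auto
    have "2 * bf Q u w / bf Q u u \<in> \<int>" if wL: "w \<in> L" for w
    proof -
      define a where "a = 2 *\<^sub>R w - bf Q v w *\<^sub>R v"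
      have "2 *\<^sub>R w \<in> L" using lat_int_scale[OF lat wL, of 2] by simp
      moreover have "bf Q v w *\<^sub>R v \<in> L" using lat_int_scale[OF lat vL int_L[OF vL wL]] .
      ultimately have "a \<in> L" unfolding a_def using lat_diff[OF lat] by blast
      moreover have "bf Q a v = 0" unfolding a_def using vv B_sym[of w v] by simp
      ultimately have "a \<in> Lv" unfolding orth_sublattice_def by simp
      then have "2 * bf Q u a / 6 \<in> \<int>" using root u6 by auto
      moreover have "bf Q u a = 2 * bf Q u w" unfolding a_def using uv by simp
      ultimately have m: "2 * bf Q u w / 3 \<in> \<int>" by simp
      obtain k where k: "bf Q u w = of_int k" using int_L[OF uL wL] Ints_cases by blast
      obtain m where mm: "2 * bf Q u w / 3 = of_int m" using m Ints_cases by blast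
      have "real_of_int (2*k) = real_of_int (3*m)" using k mm by simp
      then have km: "2*k = 3*m" by linarith
      have "2 * bf Q u w / bf Q u u = real_of_int (k - m)"
        using km k u6 by (simp add: field_simps)
      then show ?thesis by simp
    qed
    then show ?thesis using u6 uL unfolding Phi_def V_roots_def by auto
  qed
qed

end



context ctx begin

lemma neg_e: assumes "bf Q y y < 0" shows "bf Q y e \<noteq> 0"
proof
  assume h: "bf Q y e = 0"
  have "y \<noteq> 0" using assms by auto
  then show False using epos[OF _ h] assms by simp
qed

lemma x0K: "x0 \<in> K" using x0 by simp

lemma K_sub: "K \<subseteq> open_chambers Q L" by (rule connected_component_subset)

lemma K_e: assumes "y \<in> K" shows "bf Q y e < 0"
proof -
  have "\<forall>y\<in>K. bf Q y e \<noteq> 0"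
    using K_sub neg_e unfolding open_chambers_def neg_cone_def by blast
  then have "(\<forall>y\<in>K. bf Q y e > 0) \<or> (\<forall>y\<in>K. bf Q y e < 0)"
    using sign_const[OF connected_connected_component cont_bf_left] by blast
  then show ?thesis using x0K x0e assms by (meson less_asym)
qed

lemma P_e: assumes "y \<in> P" shows "bf Q y e < 0"
proof -
  have "K \<subseteq> {y. bf Q y e \<le> 0}" using K_e by (meson less_imp_le mem_Collect_eq subsetI)
  then have "closure K \<subseteq> {y. bf Q y e \<le> 0}"
    by (rule closure_minimal) (auto intro: closed_Collect_le cont_bf_left continuous_on_const)
  moreover have "bf Q y y < 0" "y \<in> closure K" using assms unfolding cell_lift_def neg_cone_def by auto
  ultimately show ?thesis using neg_e[of y] by force
qed

lemma P_neg: "y \<in> P \<Longrightarrow> bf Q y y < 0" unfolding cell_lift_def neg_cone_def by auto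

lemma P_side: assumes "u \<in> Phi Q L"
  shows "(\<forall>y\<in>P. bf Q u y \<ge> 0) \<or> (\<forall>y\<in>P. bf Q u y \<le> 0)"
proof -
  have "\<forall>y\<in>K. bf Q u y \<noteq> 0" using K_sub assms unfolding open_chambers_def by blast
  then have "(\<forall>y\<in>K. bf Q u y > 0) \<or> (\<forall>y\<in>K. bf Q u y < 0)"
    using sign_const[OF connected_connected_component cont_bf_right] by blast
  then show ?thesis
  proof
    assume "\<forall>y\<in>K. bf Q u y > 0"
    then have "closure K \<subseteq> {y. 0 \<le> bf Q u y}"
      by (intro closure_minimal) (auto intro: closed_Collect_le cont_bf_right continuous_on_const)
    then show ?thesis unfolding cell_lift_def by auto
  next
    assume "\<forall>y\<in>K. bf Q u y < 0"
    then have "closure K \<subseteq> {y. bf Q u y \<le> 0}"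
      by (intro closure_minimal) (auto intro: closed_Collect_le cont_bf_right continuous_on_const)
    then show ?thesis unfolding cell_lift_def by auto
  qed
qed

lemma revCS:
  assumes y: "bf Q y y < 0" "bf Q y e < 0" and z: "bf Q z z < 0" "bf Q z e < 0"
  shows "bf Q y z < 0"
proof -
  define c where "c = bf Q e e"
  have c: "c < 0" using ee c_def by simp
  define a where "a = bf Q y e / c"
  define b where "b = bf Q z e / c"
  have a: "a > 0" using y c unfolding a_def by (simp add: divide_neg_neg)
  have b: "b > 0" using z c unfolding b_def by (simp add: divide_neg_neg)
  define y' where "y' = y - a *\<^sub>R e"
  define z' where "z' = z - b *\<^sub>R e"
  have y'e: "bf Q y' e = 0" unfolding y'_def a_def c_def using ee by simp
  have z'e: "bf Q z' e = 0" unfolding z'_def b_def c_def using ee by simp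
  have ey': "bf Q e y' = 0" using y'e B_sym by metis
  have ez': "bf Q e z' = 0" using z'e B_sym by metis
  have yy: "y = y' + a *\<^sub>R e" and zz: "z = z' + b *\<^sub>R e" unfolding y'_def z'_def by simp_all
  have Byy: "bf Q y y = bf Q y' y' + a^2 * c"
    unfolding yy using y'e ey' c_def by (simp add: power2_eq_square)
  have Bzz: "bf Q z z = bf Q z' z' + b^2 * c"
    unfolding zz using z'e ez' c_def by (simp add: power2_eq_square)
  have Byz: "bf Q y z = bf Q y' z' + a*b * c"
    unfolding yy zz using z'e ey' y'e ez' c_def by (simp add: algebra_simps)
  have pos: "bf Q w w \<ge> 0" if "bf Q w e = 0" for w
    using epos[of w] that by (cases "w = 0") auto
  have y'p: "bf Q y' y' \<ge> 0" using pos y'e by blast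
  have z'p: "bf Q z' z' \<ge> 0" using pos z'e by blast
  have quad: "\<forall>t. 0 \<le> bf Q y' y' + 2*t*bf Q y' z' + t^2 * bf Q z' z'"
  proof
    fix t
    have "bf Q (y' + t *\<^sub>R z') e = 0" using y'e z'e by simp
    then have "0 \<le> bf Q (y' + t *\<^sub>R z') (y' + t *\<^sub>R z')" by (rule pos)
    also have "\<dots> = bf Q y' y' + 2*t*bf Q y' z' + t^2 * bf Q z' z'"
      using B_sym[of z' y'] by (simp add: algebra_simps power2_eq_square)
    finally show "0 \<le> bf Q y' y' + 2*t*bf Q y' z' + t^2 * bf Q z' z'" .
  qed
  have cs: "(bf Q y' z')^2 \<le> bf Q y' y' * bf Q z' z'" by (rule discr[OF quad z'p])
  have h1: "bf Q y' y' < a^2 * (-c)" using Byy y(1) by simp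
  have h2: "bf Q z' z' < b^2 * (-c)" using Bzz z(1) by simp
  have "bf Q y' y' * bf Q z' z' < (a^2 * (-c)) * (b^2 * (-c))"
    using h1 h2 y'p z'p a b c by (meson mult_strict_mono' less_le_not_le)
  moreover have "(a*b*(-c))^2 = (a^2 * (-c)) * (b^2 * (-c))" by (simp add: power2_eq_square algebra_simps)
  ultimately have "(bf Q y' z')^2 < (a*b*(-c))^2" using cs by linarith
  then have "bf Q y' z' < a*b*(-c)"
    using a b c by (smt (verit) mult_pos_pos power2_less_imp_less)  
  then show ?thesis using Byz by simp
qed

definition good where
  "good q \<longleftrightarrow> q \<in> P \<and> bf Q v q = 0 \<and>
     (\<exists>\<epsilon>>0. {y \<in> span L. bf Q v y = 0} \<inter> ball q \<epsilon> \<subseteq> P)"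

lemma good_OCv: assumes "good q" shows "q \<in> OCv"
proof -
  obtain \<epsilon> where qP: "q \<in> P" and qv: "bf Q v q = 0" and \<epsilon>: "\<epsilon> > 0"
    and ball: "{y \<in> span L. bf Q v y = 0} \<inter> ball q \<epsilon> \<subseteq> P"
    using assms unfolding good_def by blast
  have "q \<in> neg_cone Q Lv" using v_perp_span[OF qv] P_neg[OF qP] unfolding neg_cone_def by simp
  moreover have "bf Q u q \<noteq> 0" if u: "u \<in> Phi Q Lv" for u
  proof
    assume uq: "bf Q u q = 0"
    have uPhi: "u \<in> Phi Q L" using u Phiv_sub by blast
    have "u \<in> Lv" using u unfolding Phi_def V_roots_def by auto
    then have uv: "bf Q v u = 0" unfolding orth_sublattice_def using B_sym by auto
    have uu: "bf Q u u > 0" using u unfolding Phi_def V_roots_def by auto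
    define \<delta> where "\<delta> = \<epsilon> / (2 * (norm u + 1))"
    have npos: "0 < 2 * (norm u + 1)" by (smt (verit) norm_ge_zero)
    then have \<delta>: "\<delta> > 0" unfolding \<delta>_def using \<epsilon> by (intro divide_pos_pos)
    have nd: "\<delta> * norm u < \<epsilon>"
    proof -
      have "\<delta> * norm u \<le> \<delta> * (norm u + 1)" using \<delta> by simp
      also have "\<dots> = \<epsilon> / 2" unfolding \<delta>_def using npos by (simp add: field_simps)
      finally show ?thesis using \<epsilon> by simp
    qed
    have in1: "q + \<delta> *\<^sub>R u \<in> P"
      using ball nd \<delta> qv uv spanL by (auto simp: dist_norm)
    have in2: "q - \<delta> *\<^sub>R u \<in> P"
      using ball nd \<delta> qv uv spanL by (auto simp: dist_norm)
    have "bf Q u (q + \<delta> *\<^sub>R u) > 0" using uq uu \<delta> by simp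
    moreover have "bf Q u (q - \<delta> *\<^sub>R u) < 0" using uq uu \<delta> by simp
    ultimately show False using P_side[OF uPhi] in1 in2 by force
  qed
  ultimately show ?thesis unfolding open_chambers_def by blast
qed

lemma good_comp: assumes "good q1" "good q2"
  shows "q2 \<in> connected_component_set OCv q1"
proof -
  have q1P: "q1 \<in> P" and q2P: "q2 \<in> P" using assms unfolding good_def by auto
  have o1: "q1 \<in> OCv" and o2: "q2 \<in> OCv" using good_OCv assms by auto
  have B12: "bf Q q1 q2 < 0" using revCS P_neg P_e q1P q2P by blast
  have "closed_segment q1 q2 \<subseteq> OCv"
  proof
    fix r assume "r \<in> closed_segment q1 q2"
    then obtain t where t: "0 \<le> t" "t \<le> 1" and r: "r = (1-t) *\<^sub>R q1 + t *\<^sub>R q2"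
      unfolding closed_segment_def by auto
    have s1: "q1 \<in> span Lv" and s2: "q2 \<in> span Lv" using o1 o2 unfolding open_chambers_def neg_cone_def by auto
    have rs: "r \<in> span Lv" unfolding r by (intro span_add span_scale s1 s2)
    have B11: "bf Q q1 q1 < 0" and B22: "bf Q q2 q2 < 0" using P_neg q1P q2P by auto
    have "bf Q r r = (1-t)^2 * bf Q q1 q1 + 2*t*(1-t) * bf Q q1 q2 + t^2 * bf Q q2 q2"
      unfolding r using B_sym[of q2 q1] by (simp add: algebra_simps power2_eq_square)
    also have "\<dots> < 0"
    proof (cases "t = 0")
      case True then show ?thesis using B11 by simp
    next
      case False
      then have "t^2 * bf Q q2 q2 < 0" using t B22 by (simp add: mult_pos_neg)
      moreover have "(1-t)^2 * bf Q q1 q1 \<le> 0" using B11 by (simp add: mult_nonneg_nonpos)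
      moreover have "2*t*(1-t) * bf Q q1 q2 \<le> 0" using t B12 by (simp add: mult_nonneg_nonpos)
      ultimately show ?thesis by linarith
    qed
    finally have rn: "bf Q r r < 0" .
    have "bf Q u r \<noteq> 0" if u: "u \<in> Phi Q Lv" for u
    proof -
      have n1: "bf Q u q1 \<noteq> 0" and n2: "bf Q u q2 \<noteq> 0" using o1 o2 u unfolding open_chambers_def by auto
      have eq: "bf Q u r = (1-t) * bf Q u q1 + t * bf Q u q2" unfolding r by simp
      from P_side[of u] u Phiv_sub have "(\<forall>y\<in>P. bf Q u y \<ge> 0) \<or> (\<forall>y\<in>P. bf Q u y \<le> 0)" by blast
      then show ?thesis
      proof
        assume "\<forall>y\<in>P. bf Q u y \<ge> 0"
        then have "bf Q u q1 > 0" "bf Q u q2 > 0" using n1 n2 q1P q2P by force+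
        then have "(1-t) * bf Q u q1 + t * bf Q u q2 > 0" using t
          by (cases "t = 0") (simp, smt (verit) mult_nonneg_nonneg mult_pos_pos)
        then show ?thesis using eq by simp
      next
        assume "\<forall>y\<in>P. bf Q u y \<le> 0"
        then have "bf Q u q1 < 0" "bf Q u q2 < 0" using n1 n2 q1P q2P by force+
        then have "(1-t) * bf Q u q1 + t * bf Q u q2 < 0" using t
          by (cases "t = 0") (simp, smt (verit) mult_nonneg_nonpos mult_pos_neg)
        then show ?thesis using eq by simp
      qed
    qed
    then show "r \<in> OCv" using rs rn unfolding open_chambers_def neg_cone_def by blast
  qed
  then show ?thesis unfolding connected_component_def
    by (intro CollectI exI[where x="closed_segment q1 q2"]) auto
qed

end



locale pairctx = ctx Q L x0 v e for Q :: "real^'n^'n" and L x0 v e +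
  fixes g h :: "real^'n \<Rightarrow> real^'n"
  assumes lg: "linear g" and lh: "linear h" and gh: "\<And>x. g (h x) = x" and hg: "\<And>x. h (g x) = x"
  and gL: "g ` L \<subseteq> L" and hL: "h ` L \<subseteq> L"
  and gB: "\<And>x y. bf Q (g x) (g y) = bf Q x y" and hB: "\<And>x y. bf Q (h x) (h y) = bf Q x y"
  and gv: "g v = v" and hv: "h v = v"
  and gP: "g ` cell_lift Q L x0 \<subseteq> cell_lift Q L x0" and hP: "h ` cell_lift Q L x0 \<subseteq> cell_lift Q L x0"
begin

lemma gLv: "g ` Lv \<subseteq> Lv"
proof
  fix z assume "z \<in> g ` Lv"
  then obtain x where x: "x \<in> L" "bf Q x v = 0" "z = g x" unfolding orth_sublattice_def by auto
  have "bf Q (g x) v = 0" using gB[of x v] gv x by simp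
  then show "z \<in> Lv" using x gL unfolding orth_sublattice_def by auto
qed

lemma hLv: "h ` Lv \<subseteq> Lv"
proof
  fix z assume "z \<in> h ` Lv"
  then obtain x where x: "x \<in> L" "bf Q x v = 0" "z = h x" unfolding orth_sublattice_def by auto
  have "bf Q (h x) v = 0" using hB[of x v] hv x by simp
  then show "z \<in> Lv" using x hL unfolding orth_sublattice_def by auto
qed

lemma g_span: "g ` span Lv \<subseteq> span Lv"
  using span_linear_image[OF lg, of Lv] span_mono[OF gLv] by simp

lemma h_Phi: assumes "u \<in> Phi Q Lv" shows "h u \<in> Phi Q Lv"
proof -
  have uLv: "u \<in> Lv" using assms unfolding Phi_def V_roots_def by auto
  have huLv: "h u \<in> Lv" using hLv uLv by auto
  have "bf Q (h u) w = bf Q u (g w)" for w using gB[of "h u" w] gh by simp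
  moreover have "g w \<in> Lv" if "w \<in> Lv" for w using gLv that by auto
  ultimately show ?thesis using assms huLv hB[of u u] unfolding Phi_def V_roots_def by auto
qed

lemma OCv_img: "g ` OCv \<subseteq> OCv"
proof
  fix z assume "z \<in> g ` OCv"
  then obtain y where y: "y \<in> OCv" "z = g y" by auto
  have "g y \<in> span Lv" using g_span y(1) unfolding open_chambers_def neg_cone_def by auto
  moreover have "bf Q (g y) (g y) < 0" using gB y(1) unfolding open_chambers_def neg_cone_def by auto
  moreover have "bf Q u (g y) \<noteq> 0" if "u \<in> Phi Q Lv" for u
  proof -
    have "bf Q u (g y) = bf Q (h u) y" using gB[of "h u" y] gh by simp
    then show ?thesis using h_Phi[OF that] y(1) unfolding open_chambers_def by auto
  qed
  ultimately show "z \<in> OCv" using y unfolding open_chambers_def neg_cone_def by auto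
qed

lemma good_img: assumes "good q" shows "good (g q)"
proof -
  obtain \<epsilon> where qP: "q \<in> P" and qv: "bf Q v q = 0" and \<epsilon>: "\<epsilon> > 0"
    and ball: "{y \<in> span L. bf Q v y = 0} \<inter> ball q \<epsilon> \<subseteq> P"
    using assms unfolding good_def by blast
  obtain M where M: "M > 0" "\<And>x. norm (h x) \<le> M * norm x" using linear_bounded_pos[OF lh] by blast
  have "g q \<in> P" using gP qP by auto
  moreover have "bf Q v (g q) = 0" using gB[of v q] gv qv by simp
  moreover have "{y \<in> span L. bf Q v y = 0} \<inter> ball (g q) (\<epsilon>/M) \<subseteq> P"
  proof
    fix z assume z: "z \<in> {y \<in> span L. bf Q v y = 0} \<inter> ball (g q) (\<epsilon>/M)"
    have "bf Q v (h z) = 0" using hB[of v z] hv z by simp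
    moreover have "dist q (h z) < \<epsilon>"
    proof -
      have "dist q (h z) = norm (h (g q - z))" using hg linear_diff[OF lh] by (simp add: dist_norm)
      also have "\<dots> \<le> M * norm (g q - z)" by (rule M(2))
      also have "\<dots> < M * (\<epsilon>/M)"
      proof (rule mult_strict_left_mono)
        show "norm (g q - z) < \<epsilon>/M" using z by (simp add: dist_norm)
      qed (use M(1) in simp)
      also have "\<dots> = \<epsilon>" using M(1) by simp
      finally show ?thesis .
    qed
    ultimately have "h z \<in> P" using ball spanL by auto
    then have "g (h z) \<in> P" using gP by auto
    then show "z \<in> P" using gh by simp
  qed
  ultimately show ?thesis unfolding good_def using \<epsilon> M(1) by (meson divide_pos_pos)
qed

lemma cell_img:
  assumes pO: "p \<in> OCv" and gp: "g p \<in> connected_component_set OCv p"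
  shows "g ` cell_lift Q Lv p \<subseteq> cell_lift Q Lv p"
proof -
  let ?C = "connected_component_set OCv p"
  have gC: "g ` ?C \<subseteq> ?C"
  proof
    fix z assume "z \<in> g ` ?C"
    then obtain y where y: "y \<in> ?C" "z = g y" by auto
    have cont: "continuous_on ?C g" by (rule linear_continuous_on) (use lg in \<open>simp flip: linear_conv_bounded_linear\<close>)
    have c1: "connected (g ` ?C)" by (rule connected_continuous_image[OF cont connected_connected_component])
    have c2: "g ` ?C \<subseteq> OCv" using OCv_img connected_component_subset by blast
    have c3: "g p \<in> g ` ?C" using pO by simp
    have c4: "g y \<in> g ` ?C" using y(1) by simp
    have "connected_component OCv (g p) (g y)" by (rule connected_componentI[OF c1 c2 c3 c4])
    then have "g y \<in> connected_component_set OCv (g p)" by simp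
    then show "z \<in> ?C" using connected_component_eq[OF gp] y by simp
  qed
  have "g ` closure ?C \<subseteq> closure ?C"
    using closure_linear_image_subset[OF lg, of ?C] closure_mono[OF gC] by (rule order_trans)
  moreover have "g ` neg_cone Q Lv \<subseteq> neg_cone Q Lv"
  proof
    fix z assume "z \<in> g ` neg_cone Q Lv"
    then obtain y where y: "y \<in> span Lv" "bf Q y y < 0" "z = g y" unfolding neg_cone_def by auto
    have "g y \<in> span Lv" using g_span y(1) by blast
    then show "z \<in> neg_cone Q Lv" using y gB[of y y] unfolding neg_cone_def by simp
  qed
  ultimately show ?thesis unfolding cell_lift_def by (meson image_Int_subset le_inf_iff order_trans)
qed

end

lemma bez: "\<exists>a b::int. a * 3^k + b * 4 = 1"
proof (induction k)
  case 0 then show ?case by (intro exI[of _ 1] exI[of _ 0]) simp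
next
  case (Suc k)
  then obtain a b :: int where ab: "a * 3^k + b * 4 = 1" by blast
  have "(3*a) * 3^(Suc k) + (b - 2*a*3^k) * 4 = 1" using ab by (simp add: algebra_simps)
  then show ?case by blast
qed

lemma bf_ext:
  assumes lin: "linear f" and sp: "span L = UNIV"
    and inv: "\<forall>x\<in>L. \<forall>y\<in>L. bf Q (f x) (f y) = bf Q x y"
  shows "bf Q (f x) (f y) = bf Q x y"
proof -
  have step1: "bf Q (f x) (f y) = bf Q x y" if yL: "y \<in> L" for x y
  proof -
    have "x \<in> span L" using sp by simp
    then show ?thesis
    proof (rule span_induct)
      show "subspace {x. bf Q (f x) (f y) = bf Q x y}"
        unfolding subspace_def using linear_add[OF lin] linear_scale[OF lin] linear_0[OF lin] by simp
      show "\<And>x. x \<in> L \<Longrightarrow> bf Q (f x) (f y) = bf Q x y" using inv yL by blast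
    qed
  qed
  have "y \<in> span L" using sp by simp
  then show ?thesis
  proof (rule span_induct)
    show "subspace {y. bf Q (f x) (f y) = bf Q x y}"
      unfolding subspace_def using linear_add[OF lin] linear_scale[OF lin] linear_0[OF lin] by simp
    show "\<And>y. y \<in> L \<Longrightarrow> bf Q (f x) (f y) = bf Q x y" using step1 by blast
  qed
qed




theorem lemma7p6p1:
  fixes Q :: "real^'n^'n" and L :: "(real^'n) set" and f :: "real^'n \<Rightarrow> real^'n"
    and x0 v :: "real^'n"
  assumes "good_lattice Q L"
    and "automorphism Q L f"
    and "x0 \<in> open_chambers Q L"
    and "f ` cell_of Q L x0 = cell_of Q L x0"
    and "f ` cell_lift Q L x0 = cell_lift Q L x0"
    and "v \<in> Phi_b Q L x0" and "bf Q v v = 2" and "f v = v"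
    and "\<not> Z3_direct Q L f"
  shows "\<not> Z3_direct Q (orth_sublattice Q L v) f \<and>
         (\<exists>Pv. is_cell Q (orth_sublattice Q L v) Pv \<and>
               preserves_direct Q (orth_sublattice Q L v) Pv f)"
proof -
  note gl = assms(1)[unfolded good_lattice_def]
  have symQ: "transpose Q = Q" and lat: "is_lattice L" and spanL: "span L = UNIV"
    and integ: "integral_form Q L" and lor: "lorentzian Q (span L)" using gl by auto
  have lf: "linear f" and fL: "f ` L = L" and fBL: "\<forall>x\<in>L. \<forall>y\<in>L. bf Q (f x) (f y) = bf Q x y"
    using assms(2) unfolding automorphism_def by auto
  have fB: "\<And>x y. bf Q (f x) (f y) = bf Q x y" using bf_ext[OF lf spanL fBL] .
  have vPhi: "v \<in> Phi Q L" using assms(6) unfolding Phi_b_def by auto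
  then have vL: "v \<in> L" unfolding Phi_def V_roots_def by auto
  obtain p \<epsilon> where pP: "p \<in> cell_lift Q L x0" and pv: "bf Q v p = 0" and \<epsilon>: "\<epsilon> > 0"
    and pball: "{y \<in> span L. bf Q v y = 0} \<inter> ball p \<epsilon> \<subseteq> cell_lift Q L x0"
    using assms(6) unfolding Phi_b_def by blast
  obtain e0 where e0: "bf Q e0 e0 < 0" and e0pos: "\<And>x. x \<noteq> 0 \<Longrightarrow> bf Q x e0 = 0 \<Longrightarrow> bf Q x x > 0"
    using lor spanL unfolding lorentzian_def by auto
  have x0neg: "bf Q x0 x0 < 0" using assms(3) unfolding open_chambers_def neg_cone_def by auto
  have x0e0: "bf Q x0 e0 \<noteq> 0"
  proof
    assume h: "bf Q x0 e0 = 0"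
    have "x0 \<noteq> 0" using x0neg by auto
    then show False using e0pos[OF _ h] x0neg by simp
  qed
  define e where "e = (if bf Q x0 e0 < 0 then e0 else - e0)"
  have ee: "bf Q e e < 0" using e0 unfolding e_def by simp
  have epos: "bf Q x x > 0" if "x \<noteq> 0" "bf Q x e = 0" for x
    using e0pos[of x] that unfolding e_def by (auto split: if_splits)
  have x0e: "bf Q x0 e < 0" using x0e0 unfolding e_def by auto
  interpret C: ctx Q L x0 v e
    by unfold_locales (use symQ lat spanL integ vL assms(7) assms(3) ee epos x0e in auto)
  have surj: "surj f"
  proof -
    have "range f = f ` span L" using spanL by simp
    also have "\<dots> = span (f ` L)" using span_linear_image[OF lf] by simp
    finally show ?thesis using fL spanL by simp
  qed
  obtain g where lg: "linear g" and gf: "\<And>x. g (f x) = x" and fg: "\<And>x. f (g x) = x"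
    using linear_surjective_isomorphism[OF lf surj] by auto
  have gL: "g ` L \<subseteq> L"
  proof
    fix z assume "z \<in> g ` L"
    then obtain x where "x \<in> L" "z = g x" by auto
    then obtain y where "y \<in> L" "x = f y" using fL by auto
    then show "z \<in> L" using \<open>z = g x\<close> gf by simp
  qed
  have gB: "\<And>x y. bf Q (g x) (g y) = bf Q x y" using fB fg by metis
  have gv: "g v = v" using gf assms(8) by metis
  have gP: "g ` cell_lift Q L x0 \<subseteq> cell_lift Q L x0"
  proof
    fix z assume "z \<in> g ` cell_lift Q L x0"
    then obtain x where "x \<in> cell_lift Q L x0" "z = g x" by auto
    then obtain y where "y \<in> cell_lift Q L x0" "x = f y" using assms(5) by blast
    then show "z \<in> cell_lift Q L x0" using \<open>z = g x\<close> gf by simp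
  qed
  have fP: "f ` cell_lift Q L x0 \<subseteq> cell_lift Q L x0" using assms(5) by simp
  interpret F: pairctx Q L x0 v e f g
    by (intro pairctx.intro C.ctx_axioms pairctx_axioms.intro lf lg fg gf gL gB gv gP fP fB assms(8))
       (use fL in simp)
  interpret G: pairctx Q L x0 v e g f
    by (intro pairctx.intro C.ctx_axioms pairctx_axioms.intro lf lg fg gf gL gB gv gP fP fB assms(8))
       (use fL in simp)
  let ?Lv = "orth_sublattice Q L v"
  have gp: "C.good p" unfolding C.good_def using pP pv \<epsilon> pball by blast
  have pO: "p \<in> open_chambers Q ?Lv" using C.good_OCv[OF gp] .
  have fpc: "f p \<in> connected_component_set (open_chambers Q ?Lv) p"
    using C.good_comp[OF gp F.good_img[OF gp]] .
  have gpc: "g p \<in> connected_component_set (open_chambers Q ?Lv) p"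
    using C.good_comp[OF gp G.good_img[OF gp]] .
  let ?X = "cell_lift Q ?Lv p"
  have fX: "f ` ?X \<subseteq> ?X" using F.cell_img[OF pO fpc] .
  have gX: "g ` ?X \<subseteq> ?X" using G.cell_img[OF pO gpc] .
  have fXe: "f ` ?X = ?X"
  proof
    show "?X \<subseteq> f ` ?X"
    proof
      fix x assume "x \<in> ?X"
      then have "g x \<in> ?X" using gX by auto
      then show "x \<in> f ` ?X" using fg[of x] by (metis image_eqI)
    qed
  qed (rule fX)
  have part2: "\<exists>Pv. is_cell Q ?Lv Pv \<and> preserves_direct Q ?Lv Pv f"
  proof (intro exI conjI)
    show "is_cell Q ?Lv (cell_of Q ?Lv p)" unfolding is_cell_def using pO by blast
    have "f ` (uminus ` ?X) = uminus ` (f ` ?X)"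
      using linear_neg[OF lf] by (auto simp: image_iff)
    then have "f ` cell_of Q ?Lv p = cell_of Q ?Lv p"
      unfolding cell_of_def using fXe by (simp add: image_Un)
    then show "preserves_direct Q ?Lv (cell_of Q ?Lv p) f"
      unfolding preserves_direct_def using pO fXe by blast
  qed
  have part1: "\<not> Z3_direct Q ?Lv f"
  proof
    assume Z: "Z3_direct Q ?Lv f"
    obtain y where y3: "y \<in> three_primary Q L" and yf: "f y - y \<notin> L"
      using assms(9) unfolding Z3_direct_def by blast
    have ydual: "\<forall>w\<in>L. bf Q y w \<in> \<int>" using y3 unfolding three_primary_def dual_lattice_def by auto
    obtain k where yk: "(3::real)^k *\<^sub>R y \<in> L" using y3 unfolding three_primary_def by auto
    define x where "x = 4 *\<^sub>R y - (2 * bf Q y v) *\<^sub>R v"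
    have xv: "bf Q x v = 0" unfolding x_def using assms(7) by simp
    have vx: "bf Q v x = 0" using xv C.B_sym by metis
    have "x \<in> span ?Lv" using C.v_perp_span[OF vx] .
    moreover have "\<forall>w\<in>?Lv. bf Q x w \<in> \<int>"
    proof
      fix w assume w: "w \<in> ?Lv"
      then have wL: "w \<in> L" and "bf Q w v = 0" unfolding orth_sublattice_def by auto
      then have "bf Q v w = 0" using C.B_sym by metis
      then have "bf Q x w = 4 * bf Q y w" unfolding x_def by simp
      then show "bf Q x w \<in> \<int>" using ydual wL by simp
    qed
    moreover have "(3::real)^k *\<^sub>R x \<in> ?Lv"
    proof -
      define Y where "Y = (3::real)^k *\<^sub>R y"
      have YL: "Y \<in> L" using yk Y_def by simp
      have eq: "(3::real)^k *\<^sub>R x = 4 *\<^sub>R Y - (2 * bf Q Y v) *\<^sub>R v"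
        unfolding x_def Y_def by (simp add: algebra_simps)
      have "4 *\<^sub>R Y \<in> L" using lat_int_scale[OF lat YL, of 4] by simp
      moreover have "(2 * bf Q Y v) *\<^sub>R v \<in> L"
        using lat_int_scale[OF lat vL, of "2 * bf Q Y v"] C.int_L[OF YL vL] by simp
      ultimately have "(3::real)^k *\<^sub>R x \<in> L" using eq lat_diff[OF lat] by simp
      moreover have "bf Q ((3::real)^k *\<^sub>R x) v = 0" using xv by simp
      ultimately show ?thesis unfolding orth_sublattice_def by simp
    qed
    ultimately have "x \<in> three_primary Q ?Lv" unfolding three_primary_def dual_lattice_def by blast
    then have "f x - x \<in> ?Lv" using Z unfolding Z3_direct_def by blast
    moreover have "f x - x = 4 *\<^sub>R (f y - y)"
      unfolding x_def by (simp add: linear_diff[OF lf] linear_scale[OF lf] assms(8) algebra_simps)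
    ultimately have d4: "4 *\<^sub>R (f y - y) \<in> L" unfolding orth_sublattice_def by simp
    have "f ((3::real)^k *\<^sub>R y) \<in> L" using yk fL by blast
    then have d3: "(3::real)^k *\<^sub>R (f y - y) \<in> L"
      using lat_diff[OF lat _ yk] linear_scale[OF lf] by (simp add: algebra_simps)
    obtain a b :: int where ab: "a * 3^k + b * 4 = 1" using bez by blast
    have "real_of_int a *\<^sub>R ((3::real)^k *\<^sub>R (f y - y)) + real_of_int b *\<^sub>R (4 *\<^sub>R (f y - y)) \<in> L"
      using lat_add[OF lat lat_scale[OF lat d3] lat_scale[OF lat d4]] .
    moreover have "real_of_int a *\<^sub>R ((3::real)^k *\<^sub>R (f y - y)) + real_of_int b *\<^sub>R (4 *\<^sub>R (f y - y))
        = real_of_int (a * 3^k + b * 4) *\<^sub>R (f y - y)"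
      by (simp add: scaleR_add_left)
    ultimately show False using ab yf by simp
  qed
  show ?thesis using part1 part2 by blast
qed


end
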